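(* Assume $a^2\rho(\mathbf P_1\mathbf E)<1$, let $\theta\in\mathbb N$ and $\mathcal X\ge0$. For every reception index $j$ and every channel state $\gamma_{S_j}$, if $x_{S_j}^2\ge\mathcal X$ then $$\mathcal J_{S_j}^\theta\le\mathbf Q_{\mathcal X}(\theta)\,\mathbf P_0^{\theta-1}\mathbf P_1\boldsymbol\delta_{\gamma_{S_j}},$$ where $\mathbf Q_{\mathcal X}(\theta):=\big[\mathcal Z_\theta(\bar a^2)-\mathcal Z_\theta(c^2)\big]\max\{\mathcal X,Bc^{-2\theta}\}+\bar M\big[\mathcal Z_\theta(a^2)-\mathcal Z_\theta(1)\big]$ and $\mathcal Z_\theta(b):=b^\theta\mathbf d^T(\mathbf I-b\mathbf P_1\mathbf E)^{-1}$.
   Context: Setup. Fix reals $a,L$ with $|a|>1$ and $\bar a:=a+L$ satisfying $0<\bar a^2<1$; fix $c$ with $\bar a^2<c^2<1$, $M>0$, $B>0$, and $\bar M:=M/(a^2-1)$. Plant $x_{k+1}=ax_k+u_k+v_k$, $v_k$ i.i.d., mean $0$, variance $M$, independent of everything else. Sensor decisions $t_k\in\{0,1\}$, receptions $r_k\in\{0,1\}$ ($r_k=0$ if $t_k=0$). Controller $u_k=L\hat x_k^+$, $\hat x_k:=\bar a\hat x_{k-1}^+$, $\hat x_k^+:=x_k$ if $r_k=1$, else $\hat x_k$. Channel state $\gamma_k\in\{1,\dots,n\}$ with $\Pr[\gamma_{k+1}=i\mid\gamma_k=j,t_k=\ell]=(\mathbf P_\ell)_{ij}$, $\mathbf P_0,\mathbf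 P_1$ column-stochastic; drop probabilities $\mathbf e\in[0,1]^n$ (if $t_k=1$, $r_k=1$ w.p. $1-e_{\gamma_k}$); $\mathbf E:=\mathrm{diag}(\mathbf e)$, $\mathbf d:=\mathbf 1-\mathbf e$, $\mathbf P^0:=\mathbf I$, $\boldsymbol\delta_i$ standard basis vectors, $\rho$ spectral radius. $r_0=1$; $R_k:=\max\{i<k:r_i=1\}$; $S_0:=0$, $S_{j+1}:=\min\{k>S_j:r_k=1\}$. $I_k^+$ is the post-transmission information at time $k$, which at a reception time $S_j$ contains $x_{S_j}$, $z^+_{S_j}=0$, $S_j$, $\gamma_{S_j}$. Performance function $h_k:=x_k^2-\max\{c^{2(k-R_k)}x_{R_k}^2,B\}$. Nominal policy $\mathcal T_k^D$: $t_i=0$ for $k\le i\le k+D-1$, $t_i=1$ for $i\ge k+D$. Performance-evaluation function: $\mathcal J_{S_j}^\theta:=\mathbb E_{\mathcal T^{\theta-1}_{S_j+1}}[h_{S_{j+1}}\mid I_{S_j}^+]=\sum_{w\ge\theta}H(w,x_{S_j}^2)\,\mathbf d^T(\mathbf P_1\mathbf E)^{w-\theta}\mathbf P_0^{\theta-1}\mathbf P_1\boldsymbol\delta_{\gamma_{S_j}}$, where $H(w,y):=\bar a^{2w}y+\bar M(a^{2w}-1)-\max\{c^{2w}y,B\}$. *)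

theory Defs
  imports "HOL-Analysis.Analysis"
begin

(* Matrix power for real^'n^'n (note: "^" on vec types is componentwise, so we define it). *)
primrec matpow :: "real^'n^'n \<Rightarrow> nat \<Rightarrow> real^'n^'n" where
  "matpow A 0 = mat 1"
| "matpow A (Suc k) = A ** matpow A k"

definition diagm :: "real^'n \<Rightarrow> real^'n^'n" where
  "diagm e = (\<chi> i j. if i = j then e$i else 0)"

definition cmat_eigenvalues :: "real^'n^'n \<Rightarrow> complex set" where
  "cmat_eigenvalues A = {z. \<exists>v::complex^'n. v \<noteq> 0 \<and>
      (\<chi> i. \<Sum>j\<in>UNIV. complex_of_real (A$i$j) * v$j) = z *s v}"

definition spectral_radius :: "real^'n^'n \<Rightarrow> real" where
  "spectral_radius A = Max (cmod ` cmat_eigenvalues A)"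

definition column_stochastic :: "real^'n^'n \<Rightarrow> bool" where
  "column_stochastic P \<longleftrightarrow> (\<forall>i j. 0 \<le> P$i$j) \<and> (\<forall>j. (\<Sum>i\<in>UNIV. P$i$j) = 1)"

definition Hfun :: "real \<Rightarrow> real \<Rightarrow> real \<Rightarrow> real \<Rightarrow> real \<Rightarrow> nat \<Rightarrow> real \<Rightarrow> real" where
  "Hfun a L c M B w y = (a + L)^(2*w) * y + (M / (a^2 - 1)) * (a^(2*w) - 1) - max (c^(2*w) * y) B"

(* Performance-evaluation function J^theta at a reception time, with y = x_{S_j}^2 and
   current channel state g:
   sum_{w >= theta} H(w,y) d^T (P1 E)^(w-theta) P0^(theta-1) P1 delta_g *)
definition Jfun :: "real \<Rightarrow> real \<Rightarrow> real \<Rightarrow> real \<Rightarrow> real \<Rightarrow> real^'n^'n \<Rightarrow> real^'n^'n \<Rightarrow> real^'n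
      \<Rightarrow> nat \<Rightarrow> real \<Rightarrow> 'n \<Rightarrow> real" where
  "Jfun a L c M B P0 P1 e \<theta> y g =
     (\<Sum>k. Hfun a L c M B (k + \<theta>) y *
        ((1 - e) \<bullet> (matpow (P1 ** diagm e) k *v
            (matpow P0 (\<theta> - 1) *v (P1 *v axis g 1)))))"

definition Zfun :: "real^'n^'n \<Rightarrow> real^'n \<Rightarrow> nat \<Rightarrow> real \<Rightarrow> real^'n" where
  "Zfun P1 e \<theta> b = b^\<theta> *s ((1 - e) v* matrix_inv (mat 1 - b *\<^sub>R (P1 ** diagm e)))"

definition Qfun :: "real \<Rightarrow> real \<Rightarrow> real \<Rightarrow> real \<Rightarrow> real \<Rightarrow> real^'n^'n \<Rightarrow> real^'n \<Rightarrow> real \<Rightarrow> nat \<Rightarrow> real^'n" where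
  "Qfun a L c M B P1 e X \<theta> =
     (max X (B / c^(2*\<theta>))) *s (Zfun P1 e \<theta> ((a + L)^2) - Zfun P1 e \<theta> (c^2))
     + (M / (a^2 - 1)) *s (Zfun P1 e \<theta> (a^2) - Zfun P1 e \<theta> 1)"

end

theory Submission imports Defs "Jordan_Normal_Form.Spectral_Radius" begin

definition cm :: "('n::finite \<Rightarrow> nat) \<Rightarrow> real^'n^'n \<Rightarrow> complex mat" where
  "cm f B = Matrix.mat CARD('n) CARD('n) (\<lambda>(i,j). complex_of_real (B $ inv_into UNIV f i $ inv_into UNIV f j))"

lemma matpow_Suc2: "matpow A (Suc k) = matpow A k ** A"
  by (induction k) (simp_all add: matrix_mul_assoc matrix_mul_lid matrix_mul_rid)

locale bijn =
  fixes f :: "'n::finite \<Rightarrow> nat"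
  assumes bij: "bij_betw f UNIV {0..<CARD('n)}"
begin

abbreviation "g \<equiv> inv_into UNIV f"

lemma g_f[simp]: "g (f x) = x"
  using bij by (simp add: bij_betw_def)

lemma f_g[simp]: "i < CARD('n) \<Longrightarrow> f (g i) = i"
  using bij by (simp add: bij_betw_def f_inv_into_f)

lemma f_lt[simp]: "f x < CARD('n)"
  using bij by (auto simp: bij_betw_def)

lemma g_bij: "bij_betw g {0..<CARD('n)} UNIV"
  using bij by (rule bij_betw_inv_into)

lemma sum_reidx: "(\<Sum>m\<in>UNIV. h m) = (\<Sum>l<CARD('n). h (g l))"
proof -
  have "(\<Sum>l\<in>{0..<CARD('n)}. h (g l)) = (\<Sum>m\<in>UNIV. h m)"
    by (rule sum.reindex_bij_betw[OF g_bij])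
  then show ?thesis by (simp add: atLeast0LessThan)
qed

lemma cm_carrier[simp]: "cm f B \<in> carrier_mat CARD('n) CARD('n)"
  by (simp add: cm_def)

lemma cm_idx: "i < CARD('n) \<Longrightarrow> j < CARD('n) \<Longrightarrow> cm f B $$ (i,j) = complex_of_real (B $ g i $ g j)"
  by (simp add: cm_def)

lemma cm_pow: "cm f B ^\<^sub>m k = cm f (matpow B k)"
proof (induction k)
  case 0
  show ?case
  proof (rule eq_matI)
    fix i j assume "i < dim_row (cm f (matpow B 0))" "j < dim_col (cm f (matpow B 0))"
    then have i: "i < CARD('n)" and j: "j < CARD('n)" by (auto simp: cm_def)
    have "g i = g j \<longleftrightarrow> i = j" using i j by (metis f_g)
    then show "(cm f B ^\<^sub>m 0) $$ (i, j) = cm f (matpow B 0) $$ (i, j)"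
      using i j by (simp add: cm_idx Finite_Cartesian_Product.mat_def cm_def)
  qed (auto simp: cm_def)
next
  case (Suc k)
  show ?case
  proof (rule eq_matI)
    fix i j assume ij: "i < dim_row (cm f (matpow B (Suc k)))" "j < dim_col (cm f (matpow B (Suc k)))"
    then have i: "i < CARD('n)" and j: "j < CARD('n)" by (auto simp: cm_def)
    have "(cm f B ^\<^sub>m Suc k) $$ (i,j) = (cm f (matpow B k) * cm f B) $$ (i,j)"
      using Suc by simp
    also have "\<dots> = (\<Sum>l<CARD('n). complex_of_real (matpow B k $ g i $ g l) * complex_of_real (B $ g l $ g j))"
      using i j by (simp add: index_mult_mat scalar_prod_def cm_def atLeast0LessThan)
    also have "\<dots> = (\<Sum>m\<in>UNIV. complex_of_real (matpow B k $ g i $ m) * complex_of_real (B $ m $ g j))"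
      by (rule sum_reidx[symmetric])
    also have "\<dots> = complex_of_real (matpow B (Suc k) $ g i $ g j)"
      by (simp only: matpow_Suc2) (simp add: matrix_matrix_mult_def)
    finally show "(cm f B ^\<^sub>m Suc k) $$ (i,j) = cm f (matpow B (Suc k)) $$ (i,j)"
      using i j by (simp add: cm_idx)
  qed (auto simp: cm_def)
qed

lemma cm_mv: "dim_vec v = CARD('n) \<Longrightarrow> i < CARD('n) \<Longrightarrow>
   (cm f B *\<^sub>v v) $ i = (\<Sum>m\<in>UNIV. complex_of_real (B $ g i $ m) * v $ f m)"
  by (simp add: sum_reidx cm_def scalar_prod_def atLeast0LessThan)

lemma spec_eq: "spectrum (cm f B) = cmat_eigenvalues B"
proof (rule Set.set_eqI, rule iffI)
  fix z assume "z \<in> spectrum (cm f B)"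
  have dr: "dim_row (cm f B) = CARD('n)" by (simp add: cm_def)
  have "\<exists>v. v \<in> carrier_vec CARD('n) \<and> v \<noteq> 0\<^sub>v CARD('n) \<and> cm f B *\<^sub>v v = z \<cdot>\<^sub>v v"
    using \<open>z \<in> spectrum (cm f B)\<close> unfolding spectrum_def eigenvalue_def eigenvector_def dr mem_Collect_eq .
  then obtain v where v: "v \<in> carrier_vec CARD('n)" "v \<noteq> 0\<^sub>v CARD('n)" "cm f B *\<^sub>v v = z \<cdot>\<^sub>v v"
    by blast
  define w :: "complex^'n" where "w = (\<chi> i. v $ f i)"
  have dv: "dim_vec v = CARD('n)" using v(1) by auto
  have "\<exists>l<CARD('n). v $ l \<noteq> 0"
  proof (rule ccontr)
    assume "\<not> (\<exists>l<CARD('n). v $ l \<noteq> 0)"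
    then have "v = 0\<^sub>v CARD('n)" using dv by (intro eq_vecI) auto
    with v(2) show False by simp
  qed
  then obtain l where l: "l < CARD('n)" "v $ l \<noteq> 0" by blast
  have "w $ g l \<noteq> 0" using l by (simp add: w_def)
  then have "w \<noteq> 0" by (metis zero_index)
  moreover have "(\<chi> i. \<Sum>j\<in>UNIV. complex_of_real (B$i$j) * w$j) = z *s w"
  proof (rule Finite_Cartesian_Product.vec_eq_iff[THEN iffD2], rule allI)
    fix i
    have "(cm f B *\<^sub>v v) $ f i = (z \<cdot>\<^sub>v v) $ f i" using v(3) by simp
    then show "(\<chi> i. \<Sum>j\<in>UNIV. complex_of_real (B$i$j) * w$j) $ i = (z *s w) $ i"
      using dv by (simp add: cm_mv w_def)
  qed
  ultimately show "z \<in> cmat_eigenvalues B" unfolding cmat_eigenvalues_def by blast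
next
  fix z assume "z \<in> cmat_eigenvalues B"
  then obtain w :: "complex^'n" where w: "w \<noteq> 0" "(\<chi> i. \<Sum>j\<in>UNIV. complex_of_real (B$i$j) * w$j) = z *s w"
    unfolding cmat_eigenvalues_def by blast
  define v where "v = vec CARD('n) (\<lambda>l. w $ g l)"
  have dv: "dim_vec v = CARD('n)" by (simp add: v_def)
  have "\<exists>i. w $ i \<noteq> 0" using w(1) by (simp add: Finite_Cartesian_Product.vec_eq_iff)
  then obtain i where i: "w $ i \<noteq> 0" by blast
  have "v $ f i \<noteq> 0" using i by (simp add: v_def)
  then have vnz: "v \<noteq> 0\<^sub>v CARD('n)" using f_lt[of i] by (metis index_zero_vec(1))
  have "cm f B *\<^sub>v v = z \<cdot>\<^sub>v v"
  proof (rule eq_vecI)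
    fix l assume l: "l < dim_vec (z \<cdot>\<^sub>v v)"
    then have l': "l < CARD('n)" by (simp add: dv)
    have "(\<chi> i. \<Sum>j\<in>UNIV. complex_of_real (B$i$j) * w$j) $ g l = (z *s w) $ g l" using w(2) by simp
    then show "(cm f B *\<^sub>v v) $ l = (z \<cdot>\<^sub>v v) $ l"
      using l' dv by (simp add: cm_mv v_def)
  qed (simp add: cm_def dv)
  moreover have dr: "dim_row (cm f B) = CARD('n)" by (simp add: cm_def)
  moreover have "v \<in> carrier_vec CARD('n)" using dv by (rule carrier_vecI)
  ultimately show "z \<in> spectrum (cm f B)"
    unfolding spectrum_def eigenvalue_def eigenvector_def dr mem_Collect_eq using vnz by blast
qed

end

lemma ex_bijn: "\<exists>f::'n::finite \<Rightarrow> nat. bijn f"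
  using ex_bij_betw_finite_nat[of "UNIV::'n set"] unfolding bijn_def by auto

lemma eig_finite: "finite (cmat_eigenvalues (B::real^'n::finite^'n))"
proof -
  obtain f :: "'n \<Rightarrow> nat" where "bijn f" using ex_bijn by blast
  then interpret bijn f .
  show ?thesis using card_finite_spectrum(1)[OF cm_carrier] spec_eq by metis
qed

lemma eig_nonempty: "cmat_eigenvalues (B::real^'n::finite^'n) \<noteq> {}"
proof -
  obtain f :: "'n \<Rightarrow> nat" where "bijn f" using ex_bijn by blast
  then interpret bijn f .
  show ?thesis using spectrum_non_empty[OF cm_carrier] spec_eq by (metis zero_less_card_finite)
qed

lemma eig_le_rho: "z \<in> cmat_eigenvalues (B::real^'n::finite^'n) \<Longrightarrow> cmod z \<le> Defs.spectral_radius B"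
  unfolding Defs.spectral_radius_def using eig_finite by (intro Max_ge) auto

lemma rho_nonneg: "0 \<le> Defs.spectral_radius (B::real^'n::finite^'n)"
proof -
  obtain z where "z \<in> cmat_eigenvalues B" using eig_nonempty by blast
  then show ?thesis using eig_le_rho[of z B] by (meson norm_ge_zero order_trans)
qed

lemma pow_bound:
  assumes "Defs.spectral_radius (B::real^'n::finite^'n) < 1"
  shows "\<exists>C. \<forall>k (i::'n::finite) j. \<bar>matpow B k $ i $ j\<bar> \<le> C"
proof -
  obtain f :: "'n \<Rightarrow> nat" where "bijn f" using ex_bijn by blast
  then interpret bijn f .
  have "Spectral_Radius.spectral_radius (cm f B) = Defs.spectral_radius B"
    unfolding Spectral_Radius.spectral_radius_def Defs.spectral_radius_def spec_eq by simp
  with assms obtain C where C: "\<forall>k. norm_bound (cm f B ^\<^sub>m k) C"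
    using spectral_radius_jnf_norm_bound_less_1_upper_triangular[OF cm_carrier, of B] by auto
  have "\<bar>matpow B k $ i $ j\<bar> \<le> C" for k and i j :: 'n
  proof -
    have "norm ((cm f B ^\<^sub>m k) $$ (f i, f j)) \<le> C"
      using C unfolding norm_bound_def by (auto simp: cm_def)
    then show ?thesis by (simp add: cm_pow cm_idx)
  qed
  then show ?thesis by blast
qed


no_notation Matrix.vec_index (infixl \<open>$\<close> 100)
no_notation Matrix.scalar_prod (infix \<open>\<bullet>\<close> 70)

lemma matpow_scale: "matpow (s *\<^sub>R A) k = (s^k) *\<^sub>R matpow A k"
  by (induction k) (simp_all add: scalar_matrix_assoc matrix_scalar_ac mult.commute)

lemma mm_diff: "(A - B) ** C = A ** C - B ** (C::real^'n::finite^'n)"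
  by (simp add: matrix_matrix_mult_def Finite_Cartesian_Product.vec_eq_iff left_diff_distrib sum_subtractf)

lemma neumann:
  fixes T :: "real^'n::finite^'n"
  assumes bnd: "\<And>k i j. \<bar>matpow T k $ i $ j\<bar> \<le> C * r^k" and r: "0 \<le> r" "r < 1"
  shows "(\<lambda>k. u \<bullet> (matpow T k *v w)) sums (u \<bullet> (matrix_inv (Finite_Cartesian_Product.mat 1 - T) *v w))"
proof -
  define S :: "real^'n^'n" where "S = (\<chi> i j. suminf (\<lambda>k. matpow T k $ i $ j))"
  have summ: "summable (\<lambda>k. matpow T k $ i $ j)" for i j
  proof (rule summable_comparison_test')
    show "summable (\<lambda>k. C * r^k)" using r by (intro summable_mult summable_geometric) auto
    show "norm (matpow T k $ i $ j) \<le> C * r ^ k" for k using bnd by simp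
  qed
  have Ssums: "(\<lambda>k. matpow T k $ i $ j) sums (S $ i $ j)" for i j
    using summ[of i j] by (simp add: S_def summable_sums)
  have LS: "(Finite_Cartesian_Product.mat 1 - T) ** S = Finite_Cartesian_Product.mat 1"
  proof (rule Finite_Cartesian_Product.vec_eq_iff[THEN iffD2], rule allI, rule Finite_Cartesian_Product.vec_eq_iff[THEN iffD2], rule allI)
    fix i j
    let ?D = "Finite_Cartesian_Product.mat 1 - T"
    have h1: "(\<lambda>k. \<Sum>m\<in>UNIV. ?D $ i $ m * matpow T k $ m $ j) sums (\<Sum>m\<in>UNIV. ?D $ i $ m * S $ m $ j)"
      by (intro sums_sum sums_mult Ssums)
    have eq: "(\<Sum>m\<in>UNIV. ?D $ i $ m * matpow T k $ m $ j) = matpow T k $ i $ j - matpow T (Suc k) $ i $ j" for k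
    proof -
      have "(\<Sum>m\<in>UNIV. ?D $ i $ m * matpow T k $ m $ j) = (?D ** matpow T k) $ i $ j"
        by (simp add: matrix_matrix_mult_def)
      also have "?D ** matpow T k = matpow T k - matpow T (Suc k)"
        by (simp add: mm_diff matrix_mul_lid)
      finally show ?thesis by simp
    qed
    have "(\<lambda>k. matpow T k $ i $ j) \<longlonglongrightarrow> 0" by (rule summable_LIMSEQ_zero[OF summ])
    then have "(\<lambda>k. matpow T k $ i $ j - matpow T (Suc k) $ i $ j) sums (matpow T 0 $ i $ j - 0)"
      by (rule telescope_sums')
    with h1 eq have "(\<Sum>m\<in>UNIV. ?D $ i $ m * S $ m $ j) = matpow T 0 $ i $ j"
      by (simp add: sums_unique2)
    then show "(?D ** S) $ i $ j = Finite_Cartesian_Product.mat 1 $ i $ j"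
      by (simp add: matrix_matrix_mult_def)
  qed
  then have SL: "S ** (Finite_Cartesian_Product.mat 1 - T) = Finite_Cartesian_Product.mat 1"
    using matrix_left_right_inverse by blast
  have inv: "matrix_inv (Finite_Cartesian_Product.mat 1 - T) = S"
  proof -
    let ?D = "Finite_Cartesian_Product.mat 1 - T"
    have ex: "\<exists>X. ?D ** X = Finite_Cartesian_Product.mat 1 \<and> X ** ?D = Finite_Cartesian_Product.mat 1"
      using LS SL by blast
    define X where "X = matrix_inv ?D"
    have X: "X ** ?D = Finite_Cartesian_Product.mat 1"
      unfolding X_def matrix_inv_def using someI_ex[OF ex] by blast
    have "X = X ** (?D ** S)" using LS by (simp add: matrix_mul_rid)
    also have "\<dots> = S" by (simp add: matrix_mul_assoc X matrix_mul_lid)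
    finally show ?thesis unfolding X_def .
  qed
  have "(\<lambda>k. \<Sum>i\<in>UNIV. \<Sum>j\<in>UNIV. u $ i * (matpow T k $ i $ j * w $ j)) sums
        (\<Sum>i\<in>UNIV. \<Sum>j\<in>UNIV. u $ i * (S $ i $ j * w $ j))"
    by (intro sums_sum sums_mult sums_mult2 Ssums)
  then show ?thesis unfolding inv
    by (simp add: inner_vec_def matrix_vector_mult_def sum_distrib_left)
qed


lemma eig_scale:
  assumes "s \<noteq> 0" "z \<in> cmat_eigenvalues (s *\<^sub>R (A::real^'n::finite^'n))"
  shows "z / complex_of_real s \<in> cmat_eigenvalues A"
proof -
  obtain w :: "complex^'n" where w: "w \<noteq> 0" "(\<chi> i. \<Sum>j\<in>UNIV. complex_of_real ((s *\<^sub>R A)$i$j) * w$j) = z *s w"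
    using assms(2) unfolding cmat_eigenvalues_def by blast
  have "(\<chi> i. \<Sum>j\<in>UNIV. complex_of_real (A$i$j) * w$j) = (z / complex_of_real s) *s w"
  proof (rule Finite_Cartesian_Product.vec_eq_iff[THEN iffD2], rule allI)
    fix i
    have "(\<Sum>j\<in>UNIV. complex_of_real ((s *\<^sub>R A)$i$j) * w$j) = z * w $ i"
      using w(2) by (metis (no_types, lifting) vec_lambda_beta vector_smult_component)
    then have "complex_of_real s * (\<Sum>j\<in>UNIV. complex_of_real (A$i$j) * w$j) = z * w $ i"
      by (simp add: sum_distrib_left mult.assoc)
    then show "(\<chi> i. \<Sum>j\<in>UNIV. complex_of_real (A$i$j) * w$j) $ i = ((z / complex_of_real s) *s w) $ i"
      using assms(1) by (simp add: field_simps)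
  qed
  then show ?thesis using w(1) unfolding cmat_eigenvalues_def by blast
qed

lemma geo_bound:
  fixes A :: "real^'n::finite^'n"
  assumes a2: "a2 > 0" and rho: "a2 * Defs.spectral_radius A < 1"
  shows "\<exists>C r. 0 \<le> r \<and> r < 1 \<and> (\<forall>b k i j. 0 \<le> b \<longrightarrow> b \<le> a2 \<longrightarrow> \<bar>matpow (b *\<^sub>R A) k $ i $ j\<bar> \<le> C * r^k)"
proof -
  define \<rho> where "\<rho> = Defs.spectral_radius A"
  have \<rho>0: "0 \<le> \<rho>" unfolding \<rho>_def by (rule rho_nonneg)
  define r where "r = (1 + a2 * \<rho>) / 2"
  have r: "0 < r" "r < 1" "a2 * \<rho> < r" using rho \<rho>0 a2 unfolding r_def \<rho>_def
    by (auto simp add: add_pos_nonneg)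
  define s where "s = a2 / r"
  have s: "s > 0" using a2 r by (simp add: s_def)
  have "Defs.spectral_radius (s *\<^sub>R A) < 1"
    unfolding Defs.spectral_radius_def
  proof (subst Max_less_iff)
    show "finite (cmod ` cmat_eigenvalues (s *\<^sub>R A))" using eig_finite by blast
    show "cmod ` cmat_eigenvalues (s *\<^sub>R A) \<noteq> {}" using eig_nonempty by blast
    show "\<forall>x\<in>cmod ` cmat_eigenvalues (s *\<^sub>R A). x < 1"
    proof
      fix x assume "x \<in> cmod ` cmat_eigenvalues (s *\<^sub>R A)"
      then obtain z where z: "z \<in> cmat_eigenvalues (s *\<^sub>R A)" "x = cmod z" by blast
      have "cmod (z / complex_of_real s) \<le> \<rho>"
        unfolding \<rho>_def using eig_scale[OF _ z(1)] s by (intro eig_le_rho) auto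
      then have "cmod z \<le> s * \<rho>" using s by (simp add: norm_divide field_simps)
      also have "s * \<rho> < 1" using r s a2 by (simp add: s_def field_simps)
      finally show "x < 1" using z by simp
    qed
  qed
  then obtain C where C: "\<And>k i j. \<bar>matpow (s *\<^sub>R A) k $ i $ j\<bar> \<le> C"
    using pow_bound by blast
  have "\<bar>matpow (b *\<^sub>R A) k $ i $ j\<bar> \<le> C * r^k" if b: "0 \<le> b" "b \<le> a2" for b k i j
  proof -
    have C1: "s^k * \<bar>matpow A k $ i $ j\<bar> \<le> C"
      using C[of k i j] s by (simp add: matpow_scale abs_mult)
    have "\<bar>matpow (b *\<^sub>R A) k $ i $ j\<bar> = b^k * \<bar>matpow A k $ i $ j\<bar>"
      using b by (simp add: matpow_scale abs_mult)
    also have "\<dots> = (b / s)^k * (s^k * \<bar>matpow A k $ i $ j\<bar>)"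
      using s by (simp add: power_divide)
    also have "\<dots> \<le> (b / s)^k * C"
      using C1 b s by (intro mult_left_mono) auto
    also have "\<dots> \<le> r^k * C"
    proof (rule mult_right_mono)
      have "b / s \<le> r" using b s r a2 by (simp add: s_def field_simps)
      then show "(b / s)^k \<le> r^k" using b s by (intro power_mono) auto
      show "0 \<le> C" using C1 s by (meson abs_ge_zero order_trans zero_le_mult_iff zero_le_power less_imp_le)
    qed
    finally show ?thesis by (simp add: mult.commute)
  qed
  then show ?thesis using r by (intro exI[of _ C] exI[of _ r]) auto
qed


lemma Hbound:
  fixes p2 c2 B X y :: real
  assumes "0 < p2" "p2 < c2" "c2 < 1" "B > 0" "0 \<le> X" "X \<le> y" "\<theta> \<le> w"
  shows "p2^w * y - max (c2^w * y) B \<le> (p2^w - c2^w) * max X (B / c2^\<theta>)"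
proof -
  define p t m where "p = p2^w" "t = c2^w" "m = max X (B / c2^\<theta>)"
  have c2: "0 < c2" using assms by linarith
  have pt: "p \<le> t" unfolding p_t_m_def using assms by (intro power_mono) auto
  have t0: "0 < t" unfolding p_t_m_def using c2 by simp
  have p0: "0 \<le> p" unfolding p_t_m_def using assms by simp
  have tc: "t \<le> c2^\<theta>" unfolding p_t_m_def using assms c2 by (intro power_decreasing) auto
  have ctheta: "0 < c2^\<theta>" using c2 by simp
  show ?thesis
  proof (cases "t * y \<ge> B")
    case True
    have "B / c2^\<theta> \<le> B / t" using tc t0 assms(4) by (intro divide_left_mono) auto
    also have "B / t \<le> y" using True t0 by (simp add: divide_le_eq mult.commute)
    finally have ym: "m \<le> y" using assms unfolding p_t_m_def by simp
    have "p * y - max (t * y) B = (p - t) * y" using True by (simp add: max_def algebra_simps)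
    also have "\<dots> \<le> (p - t) * m" using ym pt by (intro mult_left_mono_neg) auto
    finally show ?thesis unfolding p_t_m_def .
  next
    case False
    then have mx: "max (t * y) B = B" by simp
    show ?thesis
    proof (cases "y \<le> m")
      case True
      have "t * X \<le> B" using False assms t0 by (smt (verit) mult_left_mono)
      moreover have "t * (B / c2^\<theta>) \<le> B"
      proof -
        have "t * (B / c2^\<theta>) \<le> c2^\<theta> * (B / c2^\<theta>)" using tc assms(4) ctheta
          by (intro mult_right_mono) auto
        then show ?thesis using ctheta c2 by simp
      qed
      ultimately have tm: "t * m \<le> B" unfolding p_t_m_def by (simp add: max_def)
      have "p * y \<le> p * m" using True p0 by (intro mult_left_mono) auto
      then have "p * y - B \<le> (p - t) * m" using tm by (simp add: algebra_simps)
      then show ?thesis using mx unfolding p_t_m_def by simp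
    next
      case False2: False
      have "p * y - B \<le> (p - t) * y" using False by (simp add: algebra_simps)
      also have "\<dots> \<le> (p - t) * m" using False2 pt by (intro mult_left_mono_neg) auto
      finally show ?thesis using mx unfolding p_t_m_def by simp
    qed
  qed
qed


definition nnm :: "real^'n::finite^'n \<Rightarrow> bool" where "nnm M \<longleftrightarrow> (\<forall>i j. 0 \<le> M$i$j)"
definition nnv :: "real^'n::finite \<Rightarrow> bool" where "nnv x \<longleftrightarrow> (\<forall>i. 0 \<le> x$i)"

lemma nnm_mult: "nnm A \<Longrightarrow> nnm B \<Longrightarrow> nnm (A ** B)"
  by (auto simp: nnm_def matrix_matrix_mult_def intro!: sum_nonneg)

lemma nnm_one: "nnm (Finite_Cartesian_Product.mat 1 :: real^'n::finite^'n)"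
  by (auto simp: nnm_def Finite_Cartesian_Product.mat_def)

lemma nnm_pow: "nnm A \<Longrightarrow> nnm (matpow A k)"
  by (induction k) (auto simp: nnm_one nnm_mult)

lemma nnv_mv: "nnm A \<Longrightarrow> nnv x \<Longrightarrow> nnv (A *v x)"
  by (auto simp: nnm_def nnv_def matrix_vector_mult_def intro!: sum_nonneg)

lemma nnv_inner: "nnv x \<Longrightarrow> nnv y \<Longrightarrow> 0 \<le> x \<bullet> y"
  by (auto simp: nnv_def inner_vec_def intro!: sum_nonneg)

lemma scaleR_mv: "((c::real) *\<^sub>R M) *v x = c *\<^sub>R (M *v (x::real^'n::finite))"
  by (simp add: matrix_vector_mult_def Finite_Cartesian_Product.vec_eq_iff sum_distrib_left mult.assoc)

lemma absb:
  fixes u w B Mb z :: real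
  assumes "0 \<le> u" "0 \<le> w" "0 \<le> B" "Mb \<le> z" "0 \<le> Mb"
  shows "\<bar>u + (z - Mb) - max w B\<bar> \<le> u + z + Mb + w + B"
proof -
  have "max w B \<le> w + B" "0 \<le> max w B" using assms by auto
  then show ?thesis using assms by (simp add: abs_le_iff)
qed

lemma smult_inner: "(c *s x) \<bullet> (y::real^'n::finite) = c * (x \<bullet> y)"
  by (simp add: inner_vec_def sum_distrib_left mult.assoc)

hide_const (open) Spectral_Radius.spectral_radius

theorem mainTheorem7:
  fixes a L c M B X y :: real and \<theta> :: nat
    and P0 P1 :: "real^'n^'n" and e :: "real^'n" and g :: 'n
  assumes "\<bar>a\<bar> > 1"
    and "0 < (a + L)^2" and "(a + L)^2 < 1"
    and "(a + L)^2 < c^2" and "c^2 < 1"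
    and "M > 0" and "B > 0"
    and "column_stochastic P0" and "column_stochastic P1"
    and "\<forall>i. 0 \<le> e$i \<and> e$i \<le> 1"
    and "a^2 * spectral_radius (P1 ** diagm e) < 1"
    and "\<theta> \<ge> 1"
    and "X \<ge> 0"
    and "y \<ge> X"
  shows "Jfun a L c M B P0 P1 e \<theta> y g
           \<le> Qfun a L c M B P1 e X \<theta> \<bullet> (matpow P0 (\<theta> - 1) *v (P1 *v axis g 1))"
proof -
  note as = assms
  define A where "A = P1 ** diagm e"
  define v where "v = matpow P0 (\<theta> - 1) *v (P1 *v axis g 1)"
  define d :: "real^'n" where "d = 1 - e"
  define q where "q k = d \<bullet> (matpow A k *v v)" for k
  define p2 c2 a2 where "p2 = (a + L)^2" "c2 = c^2" "a2 = a^2"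
  define Mb where "Mb = M / (a^2 - 1)"
  define m where "m = max X (B / c^(2*\<theta>))"
  have a2: "1 < a2"
  proof -
    have "1 * 1 < \<bar>a\<bar> * \<bar>a\<bar>" using as(1) by (intro mult_strict_mono) auto
    then show ?thesis unfolding p2_c2_a2_def by (simp add: power2_eq_square)
  qed
  have Mb: "0 < Mb" unfolding Mb_def using a2 as(6) unfolding p2_c2_a2_def by simp
  have nnA: "nnm A" unfolding A_def using as(9,10)
    by (intro nnm_mult) (auto simp: nnm_def column_stochastic_def diagm_def)
  have nnv: "nnv v" unfolding v_def using as(8,9)
    by (intro nnv_mv nnm_pow) (auto simp: nnm_def nnv_def column_stochastic_def axis_def)
  have nnd: "nnv d" unfolding d_def using as(10) by (auto simp: nnv_def)
  have q0: "0 \<le> q k" for k unfolding q_def by (intro nnv_inner nnd nnv_mv nnm_pow nnA nnv)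
  obtain C r where Cr: "0 \<le> r" "r < 1"
     "\<And>b k i j. 0 \<le> b \<Longrightarrow> b \<le> a2 \<Longrightarrow> \<bar>matpow (b *\<^sub>R A) k $ i $ j\<bar> \<le> C * r^k"
  proof -
    have rho: "a2 * Defs.spectral_radius A < 1" using as(11) unfolding A_def p2_c2_a2_def by simp
    have "\<exists>C r. 0 \<le> r \<and> r < 1 \<and> (\<forall>b k i j. 0 \<le> b \<longrightarrow> b \<le> a2 \<longrightarrow> \<bar>matpow (b *\<^sub>R A) k $ i $ j\<bar> \<le> C * r^k)"
      using a2 rho by (intro geo_bound) auto
    then show ?thesis using that by blast
  qed
  define \<sigma> where "\<sigma> b = d \<bullet> (matrix_inv (Finite_Cartesian_Product.mat 1 - b *\<^sub>R A) *v v)" for b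
  have ser: "(\<lambda>k. b^k * q k) sums \<sigma> b" if "0 \<le> b" "b \<le> a2" for b
  proof -
    have "(\<lambda>k. d \<bullet> (matpow (b *\<^sub>R A) k *v v)) sums \<sigma> b"
      unfolding \<sigma>_def using Cr that by (intro neumann[where C=C and r=r]) auto
    moreover have "d \<bullet> (matpow (b *\<^sub>R A) k *v v) = b^k * q k" for k
      by (simp add: matpow_scale q_def scaleR_mv)
    ultimately show ?thesis by simp
  qed
  have Z: "Zfun P1 e \<theta> b \<bullet> v = b^\<theta> * \<sigma> b" for b
    unfolding Zfun_def \<sigma>_def A_def d_def by (simp add: smult_inner dot_lmul_matrix)
  have p2: "0 < p2" "p2 < c2" "c2 < 1" using as(2-5) unfolding p2_c2_a2_def by auto
  define R where "R k = m * (p2^\<theta> * (p2^k * q k) - c2^\<theta> * (c2^k * q k)) + Mb * (a2^\<theta> * (a2^k * q k) - 1^\<theta> * (1^k * q k))" for k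
  have Rs: "R sums (Qfun a L c M B P1 e X \<theta> \<bullet> v)"
  proof -
    have "R sums (m * (p2^\<theta> * \<sigma> p2 - c2^\<theta> * \<sigma> c2) + Mb * (a2^\<theta> * \<sigma> a2 - 1^\<theta> * \<sigma> 1))"
      unfolding R_def using p2 a2
      by (intro sums_add sums_mult sums_diff ser) auto
    moreover have "Qfun a L c M B P1 e X \<theta> \<bullet> v = m * (p2^\<theta> * \<sigma> p2 - c2^\<theta> * \<sigma> c2) + Mb * (a2^\<theta> * \<sigma> a2 - 1^\<theta> * \<sigma> 1)"
      unfolding Qfun_def by (simp add: inner_add_left inner_diff_left smult_inner Z m_def Mb_def p2_c2_a2_def right_diff_distrib diff_divide_distrib)
    ultimately show ?thesis by simp
  qed
  define F where "F k = Hfun a L c M B (k + \<theta>) y * q k" for k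
  have J: "Jfun a L c M B P0 P1 e \<theta> y g = suminf F"
    unfolding Jfun_def F_def q_def A_def d_def v_def ..
  have Hexp: "Hfun a L c M B (k + \<theta>) y = p2^\<theta> * p2^k * y + Mb * (a2^\<theta> * a2^k - 1) - max (c2^\<theta> * c2^k * y) B" for k
    unfolding Hfun_def p2_c2_a2_def Mb_def power_mult power_add by (simp only: ac_simps)
  have FR: "F k \<le> R k" for k
  proof -
    have "p2^(k+\<theta>) * y - max (c2^(k+\<theta>) * y) B \<le> (p2^(k+\<theta>) - c2^(k+\<theta>)) * m"
      unfolding m_def using Hbound[OF p2 as(7) as(13) as(14), of \<theta> "k+\<theta>"]
      by (simp add: p2_c2_a2_def power_mult)
    then have "Hfun a L c M B (k + \<theta>) y \<le> m * (p2^\<theta> * p2^k - c2^\<theta> * c2^k) + Mb * (a2^\<theta> * a2^k - 1)"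
      unfolding Hexp by (simp add: power_add algebra_simps)
    then have "F k \<le> (m * (p2^\<theta> * p2^k - c2^\<theta> * c2^k) + Mb * (a2^\<theta> * a2^k - 1)) * q k"
      unfolding F_def using q0 by (intro mult_right_mono) auto
    then show ?thesis unfolding R_def by (simp add: algebra_simps)
  qed
  define G where "G k = p2^\<theta> * y * (p2^k * q k) + Mb * a2^\<theta> * (a2^k * q k) + Mb * (1^k * q k) + c2^\<theta> * y * (c2^k * q k) + B * (1^k * q k)" for k
  have Gs: "summable G" unfolding G_def using p2 a2
    by (intro summable_add summable_mult sums_summable[OF ser]) auto
  have y0: "0 \<le> y" using as(13,14) by simp
  have FG: "norm (F k) \<le> G k" for k
  proof -
    have "1 \<le> a2^(\<theta>+k)" using a2 by (intro one_le_power) auto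
    then have pk: "0 \<le> p2^\<theta> * p2^k" "0 \<le> c2^\<theta> * c2^k" "1 \<le> a2^\<theta> * a2^k"
      using p2 by (auto simp: power_add)
    have "\<bar>Hfun a L c M B (k + \<theta>) y\<bar> \<le> p2^\<theta> * p2^k * y + Mb * (a2^\<theta> * a2^k) + Mb + c2^\<theta> * c2^k * y + B"
    proof -
      have u: "0 \<le> p2^\<theta> * p2^k * y" "0 \<le> c2^\<theta> * c2^k * y" using pk y0 by auto
      have z: "Mb \<le> Mb * (a2^\<theta> * a2^k)" using pk Mb by simp
      have e: "Mb * (a2^\<theta> * a2^k - 1) = Mb * (a2^\<theta> * a2^k) - Mb" by (simp add: right_diff_distrib)
      show ?thesis unfolding Hexp e
        using absb[OF u(1) u(2) _ z, of B] as(7) Mb by simp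
    qed
    then have "\<bar>Hfun a L c M B (k + \<theta>) y\<bar> * q k \<le> (p2^\<theta> * p2^k * y + Mb * (a2^\<theta> * a2^k) + Mb + c2^\<theta> * c2^k * y + B) * q k"
      using q0 by (intro mult_right_mono) auto
    then show ?thesis unfolding F_def G_def using q0 by (simp add: abs_mult algebra_simps)
  qed
  have Fs: "summable F" by (rule summable_comparison_test'[OF Gs FG])
  have "suminf F \<le> suminf R" by (rule suminf_le[OF FR Fs sums_summable[OF Rs]])
  then show ?thesis unfolding J v_def[symmetric] using sums_unique[OF Rs] by simp
qed

end
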